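(* There exist a harmonic function $h$ on $\mathbf D$ and a constant $B>0$ such that $|h(z)|\le B|z|$ for all $z\in\mathbf D$ and $\max_{1/6<r<1/3}h(re^{i\theta})\ge1$ for every $\theta\in[0,2\pi)$.
   Context: $\mathbf D$ is the open unit disc. *)

theory Defs
  imports "HOL-Analysis.Analysis"
begin

definition has_dir_deriv :: "(complex \<Rightarrow> real) \<Rightarrow> complex \<Rightarrow> complex \<Rightarrow> real \<Rightarrow> bool" where
  "has_dir_deriv f v z d \<longleftrightarrow> ((\<lambda>t. f (z + of_real t * v)) has_real_derivative d) (at 0)"

definition harmonic_on :: "complex set \<Rightarrow> (complex \<Rightarrow> real) \<Rightarrow> bool" where
  "harmonic_on S h \<longleftrightarrow> open S \<and> continuous_on S h \<and>
     (\<exists>hx hy hxx hxy hyx hyy.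
        (\<forall>z\<in>S. has_dir_deriv h 1 z (hx z) \<and> has_dir_deriv h \<i> z (hy z) \<and>
                has_dir_deriv hx 1 z (hxx z) \<and> has_dir_deriv hx \<i> z (hxy z) \<and>
                has_dir_deriv hy 1 z (hyx z) \<and> has_dir_deriv hy \<i> z (hyy z) \<and>
                hxx z + hyy z = 0) \<and>
        continuous_on S hx \<and> continuous_on S hy \<and> continuous_on S hxx \<and>
        continuous_on S hxy \<and> continuous_on S hyx \<and> continuous_on S hyy)"

end

theory Submission
  imports Defs "HOL-Complex_Analysis.Complex_Analysis"
begin

lemma dir_Re:
  assumes "(G has_field_derivative G') (at z)"
  shows "has_dir_deriv (\<lambda>w. Re (G w)) v z (Re (G' * v))"
proof -
  have "((\<lambda>w. G (z + w * v)) has_field_derivative G' * v) (at 0)"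
  proof -
    have i: "((\<lambda>w. z + w * v) has_field_derivative v) (at 0)"
      by (auto intro!: derivative_eq_intros)
    have "(G has_field_derivative G') (at (z + 0 * v))" using assms by simp
    from DERIV_chain2[OF this i] show ?thesis by (simp add: mult.commute)
  qed
  then have "((\<lambda>t. G (z + of_real t * v)) has_vector_derivative G' * v) (at 0)"
    using has_vector_derivative_real_field[of "\<lambda>w. G (z + w * v)" "G' * v" 0] by simp
  then show ?thesis unfolding has_dir_deriv_def
    by (rule has_field_derivative_Re)
qed

lemma harm_Re:
  assumes F: "F holomorphic_on UNIV" and S: "open S"
  shows "harmonic_on S (\<lambda>z. Re (F z))"
proof -
  define F1 where "F1 = deriv F"
  define F2 where "F2 = deriv F1"
  have h1: "F1 holomorphic_on UNIV" unfolding F1_def using holomorphic_deriv[OF F] by simp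
  have h2: "F2 holomorphic_on UNIV" unfolding F2_def using holomorphic_deriv[OF h1] by simp
  have d0: "\<And>z. (F has_field_derivative F1 z) (at z)"
    unfolding F1_def using F by (auto intro: holomorphic_derivI)
  have d1: "\<And>z. (F1 has_field_derivative F2 z) (at z)"
    unfolding F2_def using h1 by (auto intro: holomorphic_derivI)
  have d1': "\<And>z. ((\<lambda>w. F1 w * \<i>) has_field_derivative F2 z * \<i>) (at z)"
    using d1 by (auto intro!: derivative_eq_intros)
  have cF: "continuous_on UNIV F" using F holomorphic_on_imp_continuous_on by blast
  have c1: "continuous_on UNIV F1" using h1 holomorphic_on_imp_continuous_on by blast
  have c2: "continuous_on UNIV F2" using h2 holomorphic_on_imp_continuous_on by blast
  have C: "\<And>G c. continuous_on UNIV G \<Longrightarrow> continuous_on S (\<lambda>z. Re (G z * c))"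
    by (rule continuous_on_subset[of UNIV]) (auto intro!: continuous_intros)
  have A: "\<forall>z\<in>S. has_dir_deriv (\<lambda>z. Re (F z)) 1 z (Re (F1 z)) \<and>
            has_dir_deriv (\<lambda>z. Re (F z)) \<i> z (- Im (F1 z)) \<and>
            has_dir_deriv (\<lambda>z. Re (F1 z)) 1 z (Re (F2 z)) \<and>
            has_dir_deriv (\<lambda>z. Re (F1 z)) \<i> z (- Im (F2 z)) \<and>
            has_dir_deriv (\<lambda>z. - Im (F1 z)) 1 z (- Im (F2 z)) \<and>
            has_dir_deriv (\<lambda>z. - Im (F1 z)) \<i> z (- Re (F2 z)) \<and>
            Re (F2 z) + - Re (F2 z) = 0"
    using dir_Re[OF d0, of 1] dir_Re[OF d0, of \<i>] dir_Re[OF d1, of 1] dir_Re[OF d1, of \<i>] dir_Re[OF d1', of 1] dir_Re[OF d1', of \<i>] by simp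
  have B: "continuous_on S (\<lambda>z. Re (F z))" 
    by (rule continuous_on_subset[of UNIV]) (use cF in \<open>auto intro!: continuous_intros\<close>)
  have B1: "continuous_on S (\<lambda>z. Re (F1 z))" "continuous_on S (\<lambda>z. - Im (F1 z))"
    by (rule continuous_on_subset[of UNIV], use c1 in \<open>auto intro!: continuous_intros\<close>)+
  have B2: "continuous_on S (\<lambda>z. Re (F2 z))" "continuous_on S (\<lambda>z. - Im (F2 z))"
      "continuous_on S (\<lambda>z. - Re (F2 z))"
    by (rule continuous_on_subset[of UNIV], use c2 in \<open>auto intro!: continuous_intros\<close>)+
  show ?thesis
    unfolding harmonic_on_def
    apply (intro conjI S B)
    apply (rule exI[where x="\<lambda>z. Re (F1 z)"], rule exI[where x="\<lambda>z. - Im (F1 z)"],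
      rule exI[where x="\<lambda>z. Re (F2 z)"], rule exI[where x="\<lambda>z. - Im (F2 z)"],
      rule exI[where x="\<lambda>z. - Im (F2 z)"], rule exI[where x="\<lambda>z. - Re (F2 z)"])
    using A B1 B2 by blast
qed


lemma cos_5pi12: "cos (5*pi/12) \<ge> 1/6"
proof -
  have e: "5*pi/12 = pi/4 + pi/6" by simp
  have c: "cos (5*pi/12) = sqrt 2 / 2 * (sqrt 3 / 2) - sqrt 2 / 2 * (1/2)"
    unfolding e cos_add cos_45 cos_30 sin_45 sin_30 by simp
  have s2: "sqrt 2 \<ge> 1.4" by (rule real_le_rsqrt) (simp add: power2_eq_square)
  have s3: "sqrt 3 \<ge> 1.7" by (rule real_le_rsqrt) (simp add: power2_eq_square)
  have "sqrt 2 * (sqrt 3 - 1) \<ge> 1.4 * 0.7"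
    by (rule mult_mono) (use s2 s3 in auto)
  then show ?thesis unfolding c by (simp add: algebra_simps)
qed

lemma cosb: "\<bar>x\<bar> \<le> 5*pi/12 \<Longrightarrow> cos x \<ge> 1/6"
proof -
  assume a: "\<bar>x\<bar> \<le> 5*pi/12"
  have "cos (5*pi/12) \<le> cos \<bar>x\<bar>"
    by (rule cos_monotone_0_pi_le) (use a pi_gt_zero in \<open>auto simp: abs_if\<close>)
  then show ?thesis using cos_5pi12 by simp
qed

lemma cos_shift: "cos (x - 2*pi) = cos x"
  using cos_periodic[of "x - 2*pi"] by simp

lemma cover0:
  assumes "0 \<le> t" "t \<le> pi"
  shows "\<exists>k\<in>{1,2,3,4::nat}. cos (real k * t) \<ge> 1/6"
proof -
  have p: "pi > 0" by (rule pi_gt_zero)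
  consider "t \<le> 5*pi/12" | "5*pi/12 \<le> t" "t \<le> 29*pi/48" | "29*pi/48 \<le> t" "t \<le> 29*pi/36"
    | "29*pi/36 \<le> t" by linarith
  then show ?thesis
  proof cases
    case 1
    then have "cos (real 1 * t) \<ge> 1/6" using assms by (intro cosb) auto
    then show ?thesis by blast
  next
    case 2
    have "cos (real 4 * t - 2*pi) \<ge> 1/6" using 2 by (intro cosb) (auto simp: abs_if)
    then have "cos (real 4 * t) \<ge> 1/6" by (simp only: cos_shift)
    then show ?thesis by blast
  next
    case 3
    have "cos (real 3 * t - 2*pi) \<ge> 1/6" using 3 by (intro cosb) (auto simp: abs_if)
    then have "cos (real 3 * t) \<ge> 1/6" by (simp only: cos_shift)
    then show ?thesis by blast
  next
    case 4
    have "cos (real 2 * t - 2*pi) \<ge> 1/6" using 4 assms by (intro cosb) (auto simp: abs_if)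
    then have "cos (real 2 * t) \<ge> 1/6" by (simp only: cos_shift)
    then show ?thesis by blast
  qed
qed

lemma cos_int_shift: "cos ((x::real) + 2*pi * of_int (n::int)) = cos x"
  by (simp add: cos_add)

lemma cover: "\<exists>k\<in>{1,2,3,4::nat}. cos (real k * \<psi>) \<ge> 1/6"
proof -
  define m where "m = \<lfloor>\<psi>/(2*pi)\<rfloor>"
  define t where "t = \<psi> - 2*pi * of_int m"
  have p: "pi > 0" by (rule pi_gt_zero)
  have m1: "of_int m \<le> \<psi>/(2*pi)" "\<psi>/(2*pi) < of_int m + 1" unfolding m_def by linarith+
  have t0: "0 \<le> t" using m1(1) p unfolding t_def by (simp add: field_simps)
  have t1: "t < 2*pi" using m1(2) p unfolding t_def by (simp add: field_simps)
  have ck: "cos (real k * \<psi>) = cos (real k * t)" for k :: nat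
  proof -
    have "real k * \<psi> = real k * t + 2*pi * of_int (int k * m)" unfolding t_def by (simp add: algebra_simps)
    then show ?thesis by (simp only: cos_int_shift)
  qed
  show ?thesis
  proof (cases "t \<le> pi")
    case True
    from cover0[OF t0 True] show ?thesis using ck by simp
  next
    case False
    have "0 \<le> 2*pi - t" "2*pi - t \<le> pi" using t1 False by auto
    from cover0[OF this] obtain k where k: "k\<in>{1,2,3,4::nat}" "cos (real k * (2*pi - t)) \<ge> 1/6" by blast
    have "cos (real k * (2*pi - t)) = cos (- (real k * t) + 2*pi * of_int (int k))"
      by (simp add: algebra_simps)
    also have "\<dots> = cos (real k * t)" by (simp only: cos_int_shift cos_minus)
    finally show ?thesis using k ck by auto
  qed
qed

lemma evalterm: "Re ((6 * (of_real r * exp (\<i> * of_real \<theta>))) ^ n) = (6*r)^n * cos (real n * \<theta>)"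
proof -
  have "(6 * (of_real r * exp (\<i> * of_real \<theta>))) ^ n = of_real ((6*r)^n) * exp (of_nat n * (\<i> * of_real \<theta>))"
    by (simp add: exp_of_nat_mult power_mult_distrib)
  also have "of_nat n * (\<i> * of_real \<theta>) = \<i> * of_real (real n * \<theta>)" by simp
  finally show ?thesis by (simp add: Re_exp)
qed



definition FF :: "complex \<Rightarrow> complex" where
  "FF z = (6*z)^50/2^5 + (6*z)^100/2^20 + (6*z)^150/2^45 + (6*z)^200/2^80"

lemma termbound:
  assumes "cmod z \<le> 1" "n \<ge> 1"
  shows "cmod ((6*z)^n / 2^m) \<le> 6^n/2^m * cmod z"
proof -
  have "cmod z ^ n \<le> cmod z ^ 1" by (rule power_decreasing) (use assms in auto)
  then have "6^n * cmod z ^ n \<le> 6^n * cmod z" by simp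
  then show ?thesis by (simp add: norm_divide norm_mult norm_power divide_right_mono)
qed

lemma FFbound:
  assumes "cmod z \<le> 1"
  shows "\<bar>Re (FF z)\<bar> \<le> (6^50/2^5 + 6^100/2^20 + 6^150/2^45 + 6^200/2^80) * cmod z"
proof -
  let ?a = "(6*z)^50/2^5" and ?b = "(6*z)^100/2^20" and ?c = "(6*z)^150/2^45" and ?d = "(6*z)^200/2^80"
  have "cmod (?a + ?b + ?c + ?d) \<le> cmod ?a + cmod ?b + cmod ?c + cmod ?d"
    using norm_triangle_ineq[of "?a + ?b + ?c" ?d] norm_triangle_ineq[of "?a + ?b" ?c]
      norm_triangle_ineq[of ?a ?b] by linarith
  moreover have "cmod ?a \<le> 6^50/2^5 * cmod z" by (rule termbound) (use assms in auto)
  moreover have "cmod ?b \<le> 6^100/2^20 * cmod z" by (rule termbound) (use assms in auto)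
  moreover have "cmod ?c \<le> 6^150/2^45 * cmod z" by (rule termbound) (use assms in auto)
  moreover have "cmod ?d \<le> 6^200/2^80 * cmod z" by (rule termbound) (use assms in auto)
  moreover have "\<bar>Re (FF z)\<bar> \<le> cmod (FF z)" by (rule abs_Re_le_cmod)
  ultimately show ?thesis unfolding FF_def by (simp add: algebra_simps)
qed

lemma FFval:
  "Re (FF (of_real r * exp (\<i> * of_real \<theta>))) =
     (6*r)^50/2^5 * cos (50*\<theta>) + (6*r)^100/2^20 * cos (100*\<theta>) +
     (6*r)^150/2^45 * cos (150*\<theta>) + (6*r)^200/2^80 * cos (200*\<theta>)"
  unfolding FF_def using evalterm[of r \<theta> 50] evalterm[of r \<theta> 100] evalterm[of r \<theta> 150] evalterm[of r \<theta> 200]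
  by simp

theorem lemma10:
  shows "\<exists>(h :: complex \<Rightarrow> real) (B :: real).
           harmonic_on (ball 0 1) h \<and> B > 0 \<and>
           (\<forall>z\<in>ball 0 1. \<bar>h z\<bar> \<le> B * cmod z) \<and>
           (\<forall>\<theta>\<in>{0..<2*pi}. \<exists>r\<in>{1/6<..<1/3}. h (of_real r * exp (\<i> * of_real \<theta>)) \<ge> 1)"
proof (intro exI conjI)
  show "harmonic_on (ball 0 1) (\<lambda>z. Re (FF z))"
    by (rule harm_Re) (auto simp: FF_def intro!: holomorphic_intros)
  show "(0::real) < 6^50/2^5 + 6^100/2^20 + 6^150/2^45 + 6^200/2^80" by simp
  show "\<forall>z\<in>ball 0 1. \<bar>Re (FF z)\<bar> \<le> (6^50/2^5 + 6^100/2^20 + 6^150/2^45 + 6^200/2^80) * cmod z"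
    using FFbound by auto
  show "\<forall>\<theta>\<in>{0..<2*pi}. \<exists>r\<in>{1/6<..<1/3}. Re (FF (of_real r * exp (\<i> * of_real \<theta>))) \<ge> 1"
  proof
    fix \<theta> :: real
    define a where "a = root 5 2"
    have a5: "a^5 = 2" unfolding a_def by simp
    have a1: "a > 1" unfolding a_def by simp
    have "a^4 < a^5" by (rule power_strict_increasing) (use a1 in auto)
    then have a4: "a^4 < 2" using a5 by simp
    have pw: "(a^k)^(50*j) = 2^(10*k*j)" for k j :: nat
    proof -
      have "(a^k)^(50*j) = a^(5*(10*k*j))" by (simp only: power_mult[symmetric]) (simp add: mult_ac)
      also have "\<dots> = 2^(10*k*j)" by (simp only: power_mult a5)
      finally show ?thesis .
    qed
    have rr: "a^k/6 \<in> {1/6<..<1/3}" if "k \<ge> 1" "k \<le> 4" for k :: nat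
    proof -
      have "a^k > 1" using a1 that by (simp add: one_less_power)
      moreover have "a^k \<le> a^4" using a1 that by (intro power_increasing) auto
      ultimately show ?thesis using a4 by auto
    qed
    have V: "Re (FF (of_real (a^k/6) * exp (\<i> * of_real \<theta>))) =
     2^(10*k)/2^5 * cos (50*\<theta>) + 2^(20*k)/2^20 * cos (100*\<theta>) +
     2^(30*k)/2^45 * cos (150*\<theta>) + 2^(40*k)/2^80 * cos (200*\<theta>)" for k
      unfolding FFval using pw[of k 1] pw[of k 2] pw[of k 3] pw[of k 4] by (simp add: mult_ac)
    have cb: "-1 \<le> cos (50*\<theta>)" "cos (50*\<theta>) \<le> 1" "-1 \<le> cos (100*\<theta>)" "cos (100*\<theta>) \<le> 1"
      "-1 \<le> cos (150*\<theta>)" "cos (150*\<theta>) \<le> 1" "-1 \<le> cos (200*\<theta>)" "cos (200*\<theta>) \<le> 1" by simp_all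
    obtain k where k: "k\<in>{1,2,3,4::nat}" "cos (real k * (50*\<theta>)) \<ge> 1/6" using cover by blast
    from k(1) have "Re (FF (of_real (a^k/6) * exp (\<i> * of_real \<theta>))) \<ge> 1"
    proof (elim insertE emptyE)
      assume kk: "k = 1"
      have c: "cos (50*\<theta>) \<ge> 1/6" using k(2) kk by simp
      have e: "Re (FF (of_real (a^k/6) * exp (\<i> * of_real \<theta>))) =
        2^(10*1)/2^5 * cos (50*\<theta>) + 2^(20*1)/2^20 * cos (100*\<theta>) +
        2^(30*1)/2^45 * cos (150*\<theta>) + 2^(40*1)/2^80 * cos (200*\<theta>)"
        using V[of k] kk by simp
      show ?thesis unfolding e apply simp using c cb by linarith
    next
      assume kk: "k = 2"
      have c: "cos (100*\<theta>) \<ge> 1/6" using k(2) kk by simp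
      have e: "Re (FF (of_real (a^k/6) * exp (\<i> * of_real \<theta>))) =
        2^(10*2)/2^5 * cos (50*\<theta>) + 2^(20*2)/2^20 * cos (100*\<theta>) +
        2^(30*2)/2^45 * cos (150*\<theta>) + 2^(40*2)/2^80 * cos (200*\<theta>)"
        using V[of k] kk by simp
      show ?thesis unfolding e apply simp using c cb by linarith
    next
      assume kk: "k = 3"
      have c: "cos (150*\<theta>) \<ge> 1/6" using k(2) kk by simp
      have e: "Re (FF (of_real (a^k/6) * exp (\<i> * of_real \<theta>))) =
        2^(10*3)/2^5 * cos (50*\<theta>) + 2^(20*3)/2^20 * cos (100*\<theta>) +
        2^(30*3)/2^45 * cos (150*\<theta>) + 2^(40*3)/2^80 * cos (200*\<theta>)"
        using V[of k] kk by simp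
      show ?thesis unfolding e apply simp using c cb by linarith
    next
      assume kk: "k = 4"
      have c: "cos (200*\<theta>) \<ge> 1/6" using k(2) kk by simp
      have e: "Re (FF (of_real (a^k/6) * exp (\<i> * of_real \<theta>))) =
        2^(10*4)/2^5 * cos (50*\<theta>) + 2^(20*4)/2^20 * cos (100*\<theta>) +
        2^(30*4)/2^45 * cos (150*\<theta>) + 2^(40*4)/2^80 * cos (200*\<theta>)"
        using V[of k] kk by simp
      show ?thesis unfolding e apply simp using c cb by linarith
    qed
    moreover have "a^k/6 \<in> {1/6<..<1/3}" using k(1) by (intro rr) auto
    ultimately show "\<exists>r\<in>{1/6<..<1/3}. Re (FF (of_real r * exp (\<i> * of_real \<theta>))) \<ge> 1" by blast
  qed
qed
end
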